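(* Let $f:(0,\infty)\to\mathbb R$ be convex, differentiable at $1$, with $f(1)=0$ and $f(0):=\lim_{t\to0^+}f(t)<\infty$, such that $g(t):=\frac{f(t)-f(0)}{t}$ is convex on $(0,\infty)$; assume $f(0)+f'(1)>0$. For $\xi_1\in[0,1)$, $\xi_2\in(1,\infty]$ define $$\kappa(\xi_1,\xi_2):=\sup_{t\in(\xi_1,1)\cup(1,\xi_2)}\frac{f(t)+f'(1)(1-t)}{(t-1)^2}.$$ Let $\mathcal X,\mathcal Y$ be finite or countably infinite, let $P_X\ne Q_X$ be probability mass functions with full support on $\mathcal X$, let $W_{Y|X}$ be a stochastic transformation such that every $y\in\mathcal Y$ has some $x$ with $W_{Y|X}(y|x)>0$, let $P_Y=P_XW_{Y|X}$, $Q_Y=Q_XW_{Y|X}$, and let $\xi_1:=\inf_xP_X(x)/Q_X(x)$, $\xi_2:=\sup_xP_X(x)/Q_X(x)$. Then $$\frac{D_f(P_Y\|Q_Y)}{D_f(P_X\|Q_X)}\le\frac{\kappa(\xi_1,\xi_2)}{f(0)+f'(1)}\cdot\frac{\chi^2(P_Y\|Q_Y)}{\chi^2(P_X\|Q_X)}.$$ Consequently, if $Q_X$ is finitely supported on $\mathcal X$ (and not a point mass), $$\mu_f(Q_X,W_{Y|X})\le\frac{1}{f(0)+f'(1)}\,\kappa\Big(0,\frac1{\min_xQ_X(x)}\Big)\,\mu_{\chi^2}(Q_X,W_{Y|X}).$$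
   Context: $D_f(P\|Q):=\sum_xQ(x)f(P(x)/Q(x))$ is the $f$-divergence; $\chi^2(P\|Q)=\sum_x(P(x)-Q(x))^2/Q(x)$. The contraction coefficient is $\mu_f(Q_X,W_{Y|X}):=\sup\{D_f(P_Y\|Q_Y)/D_f(P_X\|Q_X): D_f(P_X\|Q_X)\in(0,\infty)\}$ with $P_Y=P_XW_{Y|X}$, $Q_Y=Q_XW_{Y|X}$; $\mu_{\chi^2}$ is the same with $f(t)=(t-1)^2$. *)

theory Defs
  imports "HOL-Analysis.Analysis" "HOL-Library.Extended_Real"
begin

definition is_pmf :: "('a \<Rightarrow> real) \<Rightarrow> bool" where
  "is_pmf P \<longleftrightarrow> (\<forall>x. 0 \<le> P x) \<and> (P has_sum 1) UNIV"

text \<open>Stochastic transformation W x y = W(y|x).\<close>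
definition is_channel :: "('a \<Rightarrow> 'b \<Rightarrow> real) \<Rightarrow> bool" where
  "is_channel W \<longleftrightarrow> (\<forall>x. (\<forall>y. 0 \<le> W x y) \<and> (W x has_sum 1) UNIV)"

definition push :: "('a \<Rightarrow> real) \<Rightarrow> ('a \<Rightarrow> 'b \<Rightarrow> real) \<Rightarrow> 'b \<Rightarrow> real" where
  "push P W = (\<lambda>y. \<Sum>\<^sub>\<infinity>x. P x * W x y)"

text \<open>f-divergence (terms with Q x = 0 never occur in our use: Q has full support).\<close>
definition Df :: "(real \<Rightarrow> real) \<Rightarrow> ('a \<Rightarrow> real) \<Rightarrow> ('a \<Rightarrow> real) \<Rightarrow> real" where
  "Df f P Q = (\<Sum>\<^sub>\<infinity>x. Q x * f (P x / Q x))"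

definition Df_finite :: "(real \<Rightarrow> real) \<Rightarrow> ('a \<Rightarrow> real) \<Rightarrow> ('a \<Rightarrow> real) \<Rightarrow> bool" where
  "Df_finite f P Q \<longleftrightarrow> (\<lambda>x. Q x * f (P x / Q x)) summable_on UNIV"

definition chi2 :: "('a \<Rightarrow> real) \<Rightarrow> ('a \<Rightarrow> real) \<Rightarrow> real" where
  "chi2 P Q = (\<Sum>\<^sub>\<infinity>x. (P x - Q x)^2 / Q x)"

definition chi2_finite :: "('a \<Rightarrow> real) \<Rightarrow> ('a \<Rightarrow> real) \<Rightarrow> bool" where
  "chi2_finite P Q \<longleftrightarrow> (\<lambda>x. (P x - Q x)^2 / Q x) summable_on UNIV"

text \<open>Extension of f by its limit value f0 at 0.\<close>
definition fext :: "(real \<Rightarrow> real) \<Rightarrow> real \<Rightarrow> real \<Rightarrow> real" where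
  "fext f f0 t = (if t = 0 then f0 else f t)"

definition mu :: "(real \<Rightarrow> real) \<Rightarrow> ('a \<Rightarrow> real) \<Rightarrow> ('a \<Rightarrow> 'b \<Rightarrow> real) \<Rightarrow> ereal" where
  "mu f Q W = (SUP P \<in> {P. is_pmf P \<and> Df_finite f P Q \<and> 0 < Df f P Q}.
       ereal (Df f (push P W) (push Q W) / Df f P Q))"

definition kappa :: "(real \<Rightarrow> real) \<Rightarrow> real \<Rightarrow> real \<Rightarrow> ereal \<Rightarrow> ereal" where
  "kappa f f1 xi1 xi2 = (SUP t \<in> {t. xi1 < t \<and> t < 1} \<union> {t. 1 < t \<and> ereal t < xi2}.
       ereal ((f t + f1 * (1 - t)) / (t - 1)^2))"

end

theory Submission
  imports Defs
begin

lemma has_sum_diff':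
  fixes f g :: "'a \<Rightarrow> real"
  assumes "(f has_sum a) A" "(g has_sum b) A"
  shows "((\<lambda>x. f x - g x) has_sum (a - b)) A"
proof -
  have "((\<lambda>x. - g x) has_sum (- b)) A" using assms(2) has_sum_uminus[where f=g and a="-b" and A=A] by simp
  from has_sum_add[OF assms(1) this] show ?thesis by simp
qed

lemma side_key:
  fixes q p :: "'a \<Rightarrow> real" and F :: "real \<Rightarrow> real"
  assumes qi: "q i > 0" and low: "c*(p i/q i - 1)^2 \<le> F(p i/q i) + f1*(1 - p i/q i)"
  shows "c * ((p i - q i)^2/q i) \<le> q i * (F(p i/q i) + f1*(1 - p i/q i))"
proof -
  have "(p i - q i)^2/q i = q i * (p i/q i - 1)^2" using qi
    by (simp add: field_simps power2_eq_square)
  then show ?thesis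
    using mult_left_mono[OF low, of "q i"] qi by (simp add: algebra_simps)
qed

lemma side:
  fixes q p :: "'a \<Rightarrow> real" and F :: "real \<Rightarrow> real"
  assumes q1: "(q has_sum 1) UNIV" and p1: "(p has_sum 1) UNIV" and qpos: "\<And>i. q i > 0"
    and low: "\<And>i. c*(p i/q i - 1)^2 \<le> F(p i/q i) + f1*(1 - p i/q i)" and c: "c > 0"
  shows "\<And>i. c * ((p i - q i)^2/q i) \<le> q i * (F(p i/q i) + f1*(1 - p i/q i))"
    and "\<And>i. 0 \<le> (p i - q i)^2/q i"
    and "(\<lambda>i. q i * F(p i/q i)) summable_on UNIV \<longleftrightarrow> (\<lambda>i. q i * (F(p i/q i) + f1*(1 - p i/q i))) summable_on UNIV"
    and "infsum (\<lambda>i. q i * F(p i/q i)) UNIV = infsum (\<lambda>i. q i * (F(p i/q i) + f1*(1 - p i/q i))) UNIV"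
    and "(\<lambda>i. q i * (F(p i/q i) + f1*(1 - p i/q i))) summable_on UNIV \<Longrightarrow> (\<lambda>i. (p i - q i)^2/q i) summable_on UNIV"
proof -
  have key: "c * ((p i - q i)^2/q i) \<le> q i * (F(p i/q i) + f1*(1 - p i/q i))" for i
    using qpos[of i] low[of i] by (rule side_key)
  fix i
  show "c * ((p i - q i)^2/q i) \<le> q i * (F(p i/q i) + f1*(1 - p i/q i))" using qpos[of i] low[of i] by (rule side_key)
  next
  have key: "c * ((p i - q i)^2/q i) \<le> q i * (F(p i/q i) + f1*(1 - p i/q i))" for i
    using qpos[of i] low[of i] by (rule side_key)
  fix i show "0 \<le> (p i - q i)^2/q i" using qpos[of i] by simp
next
  have key: "c * ((p i - q i)^2/q i) \<le> q i * (F(p i/q i) + f1*(1 - p i/q i))" for i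
    using qpos[of i] low[of i] by (rule side_key)
  have eq: "q i * (F(p i/q i) + f1*(1 - p i/q i)) = q i * F(p i/q i) + f1 * (q i - p i)" for i
    using qpos[of i] by (simp add: field_simps)
  have d: "((\<lambda>i. f1 * (q i - p i)) has_sum 0) UNIV"
    using has_sum_cmult_right[OF has_sum_diff'[OF q1 p1], of f1] by simp
  show *: "(\<lambda>i. q i * F(p i/q i)) summable_on UNIV \<longleftrightarrow> (\<lambda>i. q i * (F(p i/q i) + f1*(1 - p i/q i))) summable_on UNIV"
  proof
    assume "(\<lambda>i. q i * F(p i/q i)) summable_on UNIV"
    then have "((\<lambda>i. q i * F(p i/q i)) has_sum infsum (\<lambda>i. q i * F(p i/q i)) UNIV) UNIV" by (rule has_sum_infsum)
    from has_sum_add[OF this d] show "(\<lambda>i. q i * (F(p i/q i) + f1*(1 - p i/q i))) summable_on UNIV"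
      unfolding eq summable_on_def by blast
  next
    assume "(\<lambda>i. q i * (F(p i/q i) + f1*(1 - p i/q i))) summable_on UNIV"
    then have "((\<lambda>i. q i * F(p i/q i) + f1 * (q i - p i)) has_sum infsum (\<lambda>i. q i * (F(p i/q i) + f1*(1 - p i/q i))) UNIV) UNIV"
      unfolding eq[symmetric] by (rule has_sum_infsum)
    from has_sum_diff'[OF this d] show "(\<lambda>i. q i * F(p i/q i)) summable_on UNIV"
      unfolding summable_on_def by auto
  qed
  show "infsum (\<lambda>i. q i * F(p i/q i)) UNIV = infsum (\<lambda>i. q i * (F(p i/q i) + f1*(1 - p i/q i))) UNIV"
  proof (cases "(\<lambda>i. q i * F(p i/q i)) summable_on UNIV")
    case True
    then have "((\<lambda>i. q i * F(p i/q i)) has_sum infsum (\<lambda>i. q i * F(p i/q i)) UNIV) UNIV" by (rule has_sum_infsum)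
    from has_sum_add[OF this d] show ?thesis unfolding eq[symmetric] by (simp add: infsumI)
  next
    case False
    then show ?thesis using * by (simp add: infsum_not_exists)
  qed
next
  assume s: "(\<lambda>i. q i * (F(p i/q i) + f1*(1 - p i/q i))) summable_on UNIV"
  have "(\<lambda>i. (1/c) * (q i * (F(p i/q i) + f1*(1 - p i/q i)))) summable_on UNIV"
    using summable_on_cmult_right[OF s, of "1/c"] by simp
  then show "(\<lambda>i. (p i - q i)^2/q i) summable_on UNIV"
  proof (rule summable_on_comparison_test)
    fix i
    have "c * ((p i - q i)^2/q i) \<le> q i * (F(p i/q i) + f1*(1 - p i/q i))"
      using qpos[of i] low[of i] by (rule side_key)
    then show "(p i - q i)^2/q i \<le> (1/c) * (q i * (F(p i/q i) + f1*(1 - p i/q i)))"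
      using c by (simp add: field_simps)
    show "0 \<le> (p i - q i)^2/q i" using qpos[of i] by simp
  qed
qed


lemma core:
  fixes F :: "real \<Rightarrow> real" and P Q PY QY :: "_ \<Rightarrow> real" and K :: ereal
  assumes P1: "(P has_sum 1) UNIV" and Q1: "(Q has_sum 1) UNIV" and Qpos: "\<And>x. Q x > 0"
    and PY1: "(PY has_sum 1) UNIV" and QY1: "(QY has_sum 1) UNIV" and QYpos: "\<And>y. QY y > 0"
    and PQ: "P \<noteq> Q" and c: "c > 0" and F1: "F 1 = 0"
    and DfX: "Df_finite F P Q" and chiX: "chi2_finite P Q"
    and lowX: "\<And>x. c*(P x/Q x - 1)^2 \<le> F(P x/Q x) + f1*(1 - P x/Q x)"
    and lowY: "\<And>y. c*(PY y/QY y - 1)^2 \<le> F(PY y/QY y) + f1*(1 - PY y/QY y)"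
    and upY: "\<And>y. PY y/QY y \<noteq> 1 \<Longrightarrow> ereal ((F(PY y/QY y) + f1*(1 - PY y/QY y))/(PY y/QY y - 1)^2) \<le> K"
    and Kpos: "0 < K"
  shows "0 < Df F P Q" "0 < chi2 P Q"
    "ereal (Df F PY QY / Df F P Q) \<le> ereal (1/c) * K * ereal (chi2 PY QY / chi2 P Q)"
proof -
  note sX = side[OF Q1 P1 Qpos lowX c]
  note sY = side[OF QY1 PY1 QYpos lowY c]
  define AX where "AX x = (P x - Q x)^2/Q x" for x
  define BX where "BX x = Q x * (F(P x/Q x) + f1*(1 - P x/Q x))" for x
  define AY where "AY y = (PY y - QY y)^2/QY y" for y
  define BY where "BY y = QY y * (F(PY y/QY y) + f1*(1 - PY y/QY y))" for y
  have BXs: "BX summable_on UNIV" using sX(3) DfX unfolding Df_finite_def BX_def by simp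
  have DfXe: "Df F P Q = infsum BX UNIV" using sX(4) unfolding Df_def BX_def by simp
  have AXs: "AX summable_on UNIV" using chiX unfolding chi2_finite_def AX_def by simp
  have chiXe: "chi2 P Q = infsum AX UNIV" unfolding chi2_def AX_def by simp
  have AXn: "\<And>x. 0 \<le> AX x" using sX(2) unfolding AX_def by simp
  have cAB: "\<And>x. c * AX x \<le> BX x" using sX(1) unfolding AX_def BX_def by simp
  have le1: "c * chi2 P Q \<le> Df F P Q"
    unfolding DfXe chiXe
    by (rule has_sum_mono[OF has_sum_cmult_right[OF has_sum_infsum[OF AXs]] has_sum_infsum[OF BXs]])
       (use cAB in auto)
  have chipos: "0 < chi2 P Q"
  proof (rule ccontr)
    assume "\<not> 0 < chi2 P Q"
    then have "infsum AX UNIV \<le> 0" unfolding chiXe by simp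
    then have "AX x = 0" for x using nonneg_infsum_le_0D[OF _ AXs AXn] by blast
    then have "P x = Q x" for x using Qpos[of x] unfolding AX_def by (metis divide_eq_0_iff less_irrefl power_eq_0_iff right_minus_eq)
    then show False using PQ by blast
  qed
  then show "0 < chi2 P Q" .
  have Dfpos: "0 < Df F P Q" using le1 chipos c by (smt (verit) mult_pos_pos)
  then show "0 < Df F P Q" .
  have DfYe: "Df F PY QY = infsum BY UNIV" using sY(4) unfolding Df_def BY_def by simp
  have DYs: "(\<lambda>y. QY y * F (PY y / QY y)) summable_on UNIV \<longleftrightarrow> BY summable_on UNIV"
    using sY(3) unfolding BY_def by simp
  have chiYe: "chi2 PY QY = infsum AY UNIV" unfolding chi2_def AY_def by simp
  have AYn: "\<And>y. 0 \<le> AY y" using sY(2) unfolding AY_def by simp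
  have cABY: "\<And>y. c * AY y \<le> BY y" using sY(1) unfolding AY_def BY_def by simp
  have BYn: "\<And>y. 0 \<le> BY y" using AYn cABY c by (smt (verit) mult_nonneg_nonneg)
  have BAs: "BY summable_on UNIV \<Longrightarrow> AY summable_on UNIV" using sY(5) unfolding AY_def BY_def by simp
  have DfYn: "0 \<le> Df F PY QY" unfolding DfYe by (rule infsum_nonneg) (use BYn in auto)
  have chiYn: "0 \<le> chi2 PY QY" unfolding chiYe by (rule infsum_nonneg) (use AYn in auto)
  have one: "BY y = 0 \<and> AY y = 0" if "PY y / QY y = 1" for y
  proof -
    have "PY y = QY y" using that QYpos[of y] by (simp add: field_simps)
    then show ?thesis unfolding BY_def AY_def using F1 QYpos[of y] by simp
  qed
  show "ereal (Df F PY QY / Df F P Q) \<le> ereal (1/c) * K * ereal (chi2 PY QY / chi2 P Q)"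
  proof (cases K)
    case (real k)
    have kpos: "k > 0" using Kpos real by simp
    have BkA: "BY y \<le> k * AY y" for y
    proof (cases "PY y / QY y = 1")
      case True then show ?thesis using one by simp
    next
      case False
      let ?r = "PY y / QY y"
      have "(F ?r + f1*(1 - ?r))/(?r - 1)^2 \<le> k" using upY[OF False] real by simp
      moreover have pos: "(?r - 1)^2 > 0" using False by simp
      ultimately have "F ?r + f1*(1 - ?r) \<le> k * (?r - 1)^2" by (simp add: divide_le_eq)
      then have "QY y * (F ?r + f1*(1 - ?r)) \<le> QY y * (k * (?r - 1)^2)"
        using QYpos[of y] by (simp add: mult_left_mono)
      also have "QY y * (k * (?r - 1)^2) = k * AY y"
        unfolding AY_def using QYpos[of y] by (simp add: field_simps power2_eq_square)
      finally show ?thesis unfolding BY_def .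
    qed
    have DY: "Df F PY QY \<le> k * chi2 PY QY"
    proof (cases "AY summable_on UNIV")
      case True
      then have Bs: "BY summable_on UNIV"
        using summable_on_comparison_test[OF summable_on_cmult_right[OF True, of k]] BkA BYn by blast
      show ?thesis unfolding DfYe chiYe
        by (rule has_sum_mono[OF has_sum_infsum[OF Bs] has_sum_cmult_right[OF has_sum_infsum[OF True]]])
           (use BkA in auto)
    next
      case False
      then have "\<not> BY summable_on UNIV" using BAs by blast
      then have "\<not> (\<lambda>y. QY y * F (PY y / QY y)) summable_on UNIV" using DYs by blast
      then have "Df F PY QY = 0" unfolding Df_def by (simp add: infsum_not_exists)
      moreover have "chi2 PY QY = 0" using False unfolding chiYe by (simp add: infsum_not_exists)
      ultimately show ?thesis by simp
    qed
    have "Df F PY QY / Df F P Q \<le> (k * chi2 PY QY) / Df F P Q"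
      using DY Dfpos by (simp add: divide_right_mono)
    also have "\<dots> \<le> (k * chi2 PY QY) / (c * chi2 P Q)"
      apply (rule divide_left_mono)
      using le1 kpos chiYn c chipos Dfpos by auto
    also have "\<dots> = 1/c * k * (chi2 PY QY / chi2 P Q)" by simp
    finally show ?thesis using real by simp
  next
    case PInf
    show ?thesis
    proof (cases "chi2 PY QY > 0")
      case True
      then have eq: "ereal (1/c) * K * ereal (chi2 PY QY / chi2 P Q) = \<infinity>"
        using PInf c chipos by simp
      show ?thesis unfolding eq by simp
    next
      case False
      then have ch0: "chi2 PY QY = 0" using chiYn by simp
      have "Df F PY QY = 0"
      proof (cases "BY summable_on UNIV")
        case True
        have "infsum AY UNIV \<le> 0" using ch0 chiYe by simp
        then have "AY y = 0" for y using nonneg_infsum_le_0D[OF _ BAs[OF True] AYn] by blast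
        then have "PY y = QY y" for y using QYpos[of y] unfolding AY_def
          by (metis divide_eq_0_iff less_irrefl power_eq_0_iff right_minus_eq)
        then have "PY y / QY y = 1" for y using QYpos[of y] by simp
        then have "BY y = 0" for y using one by blast
        then have "BY = (\<lambda>_. 0)" by blast
        then show ?thesis unfolding DfYe by simp
      next
        case False
        then have "\<not> (\<lambda>y. QY y * F (PY y / QY y)) summable_on UNIV" using DYs by blast
        then show ?thesis unfolding Df_def by (simp add: infsum_not_exists)
      qed
      then show ?thesis using ch0 by (simp add: zero_ereal_def[symmetric])
    qed
  next
    case MInf then show ?thesis using Kpos by simp
  qed
qed


lemma lower_f:
  fixes f :: "real \<Rightarrow> real"
  assumes f_deriv: "(f has_real_derivative f1) (at 1)"
    and f_one: "f 1 = 0"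
    and g_convex: "convex_on {0<..} (\<lambda>t. (f t - f0) / t)"
    and t: "t > 0"
  shows "(f0+f1)*(t-1)^2 \<le> f t + f1*(1-t)"
proof -
  have d1: "((\<lambda>t. f t - f0) has_real_derivative f1) (at 1)"
    using f_deriv by (auto intro!: derivative_eq_intros)
  have "((\<lambda>t. (f t - f0) / t) has_real_derivative ((f1 * 1 - (f 1 - f0) * 1) / (1 * 1))) (at 1)"
    by (rule DERIV_divide[OF d1 DERIV_ident]) simp
  then have dg: "((\<lambda>t. (f t - f0) / t) has_real_derivative (f0+f1)) (at 1 within {0<..})"
    using f_one has_field_derivative_at_within by (simp add: add.commute)
  have "(f0+f1) * (t - 1) \<le> (f t - f0) / t - (f 1 - f0) / 1"
    using convex_on_imp_above_tangent[OF g_convex _ _ _ dg, of t] t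
    by (simp add: convex_connected interior_open)
  then have "(f0+f1) * (t - 1) \<le> (f t - f0) / t + f0" using f_one by simp
  then have "t * ((f0+f1) * (t - 1)) \<le> t * ((f t - f0) / t + f0)"
    using t by (simp add: mult_left_mono)
  moreover have "t * ((f t - f0) / t + f0) = f t - f0 + t * f0"
    using t by (simp add: field_simps)
  ultimately have "t * ((f0+f1) * (t - 1)) \<le> f t - f0 + t * f0" by simp
  then show ?thesis by (simp add: power2_eq_square algebra_simps)
qed

lemma kappa_upper:
  fixes \<phi> :: "real \<Rightarrow> real" and a :: real and b K :: ereal
  assumes sup: "\<And>s. (a<s \<and> s<1) \<or> (1<s \<and> ereal s < b) \<Longrightarrow> ereal (\<phi> s) \<le> K"
    and t1: "t \<noteq> 1" and at: "a \<le> t" and tb: "ereal t \<le> b" and cont: "isCont \<phi> t"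
  shows "ereal (\<phi> t) \<le> K"
proof -
  have lim: "((\<lambda>s. ereal (\<phi> s)) \<longlongrightarrow> ereal (\<phi> t)) F" if "F \<le> at t" for F
  proof -
    have "(\<phi> \<longlongrightarrow> \<phi> t) (at t)" using cont isCont_def by blast
    then have "(\<phi> \<longlongrightarrow> \<phi> t) F" using tendsto_mono that by blast
    then show ?thesis by (rule tendsto_ereal)
  qed
  show ?thesis
  proof (cases "t < 1")
    case True
    show ?thesis
    proof (cases "a < t")
      case True then show ?thesis using sup \<open>t < 1\<close> by blast
    next
      case False
      then have ta: "t = a" using at by simp
      show ?thesis
      proof (rule tendsto_upperbound[OF lim[of "at_right t"]])
        show "at_right t \<le> at t" by (simp add: at_le)
        show "\<not> trivial_limit (at_right t)" by simp
        show "\<forall>\<^sub>F s in at_right t. ereal (\<phi> s) \<le> K"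
          unfolding eventually_at_right_field using \<open>t < 1\<close> ta sup by blast
      qed
    qed
  next
    case False
    then have t1': "t > 1" using t1 by simp
    show ?thesis
    proof (cases "ereal t < b")
      case True then show ?thesis using sup t1' by blast
    next
      case False
      then have tb': "ereal t = b" using tb by simp
      show ?thesis
      proof (rule tendsto_upperbound[OF lim[of "at_left t"]])
        show "at_left t \<le> at t" by (simp add: at_le)
        show "\<not> trivial_limit (at_left t)" by simp
        show "\<forall>\<^sub>F s in at_left t. ereal (\<phi> s) \<le> K"
          unfolding eventually_at_left_field using t1' tb' sup
          by (intro exI[of _ 1]) auto
      qed
    qed
  qed
qed

lemma phi_cont:
  fixes f :: "real \<Rightarrow> real"
  assumes f_convex: "convex_on {0<..} f" and t: "t > 0" "t \<noteq> 1"
  shows "isCont (\<lambda>s. (f s + f1 * (1 - s)) / (s - 1)^2) t"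
proof -
  have "continuous_on {0<..} f" by (rule convex_on_continuous[OF _ f_convex]) simp
  then have "isCont f t" using t continuous_on_eq_continuous_at[of "{0<..}" f] by auto
  then show ?thesis using t by (auto intro!: continuous_intros)
qed

lemma kappa_ge:
  assumes "(a<s \<and> s<1) \<or> (1<s \<and> ereal s < b)"
  shows "ereal ((f s + f1 * (1 - s)) / (s - 1)^2) \<le> kappa f f1 a b"
  unfolding kappa_def by (rule SUP_upper) (use assms in auto)

lemma kappa_at0:
  fixes f :: "real \<Rightarrow> real"
  assumes f_zero: "(f \<longlongrightarrow> f0) (at_right 0)" and b: "ereal 1 < b"
  shows "ereal (f0 + f1) \<le> kappa f f1 0 b"
proof (rule tendsto_upperbound)
  have "((\<lambda>s. (f s + f1 * (1 - s)) / (s - 1)^2) \<longlongrightarrow> (f0 + f1 * (1 - 0)) / (0 - 1)^2) (at_right 0)"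
    by (intro tendsto_intros f_zero) auto
  then show "((\<lambda>s. ereal ((f s + f1 * (1 - s)) / (s - 1)^2)) \<longlongrightarrow> ereal (f0 + f1)) (at_right 0)"
    by (intro tendsto_ereal) simp
  show "\<not> trivial_limit (at_right (0::real))" by simp
  show "\<forall>\<^sub>F s in at_right 0. ereal ((f s + f1 * (1 - s)) / (s - 1)^2) \<le> kappa f f1 0 b"
    unfolding eventually_at_right_field by (intro exI[of _ 1]) (auto intro!: kappa_ge)
qed


lemma has_sum_le_single:
  fixes f :: "'a \<Rightarrow> real"
  assumes "(f has_sum s) UNIV" "\<And>x. 0 \<le> f x"
  shows "f y \<le> s"
  using finite_sum_le_has_sum[OF assms(1), of "{y}"] assms(2) by auto

lemma pmf_summable: "is_pmf P \<Longrightarrow> P summable_on UNIV"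
  unfolding is_pmf_def summable_on_def by blast

lemma channel_le1: "is_channel W \<Longrightarrow> W x y \<le> 1"
  unfolding is_channel_def using has_sum_le_single by metis

lemma channel_nonneg: "is_channel W \<Longrightarrow> 0 \<le> W x y"
  unfolding is_channel_def by blast

lemma push_inner:
  assumes "is_pmf P" "is_channel W"
  shows "((\<lambda>x. P x * W x y) has_sum push P W y) UNIV"
proof -
  have "(\<lambda>x. P x * W x y) summable_on UNIV"
    apply (rule summable_on_comparison_test[OF pmf_summable[OF assms(1)]])
    using assms channel_le1[OF assms(2)] channel_nonneg[OF assms(2)] unfolding is_pmf_def
    by (auto intro: mult_left_le)
  then show ?thesis unfolding push_def by (rule has_sum_infsum)
qed

lemma push_pmf:
  assumes "is_pmf P" "is_channel W"
  shows "(push P W has_sum 1) UNIV"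
proof -
  have Pn: "\<And>x. 0 \<le> P x" and Ps: "(P has_sum 1) UNIV" using assms(1) unfolding is_pmf_def by auto
  have row: "((\<lambda>y. (\<lambda>(x,y). P x * W x y) (x, y)) has_sum P x) UNIV" for x
    using has_sum_cmult_right[of "W x" UNIV 1 "P x"] assms(2) unfolding is_channel_def by auto
  have sm: "(\<lambda>(x,y). P x * W x y) summable_on Sigma UNIV (\<lambda>_. UNIV)"
    apply (rule summable_on_SigmaI[OF row])
    using Ps assms(2) Pn unfolding summable_on_def is_channel_def by auto
  have hs: "((\<lambda>(x,y). P x * W x y) has_sum 1) (UNIV \<times> UNIV)"
    using has_sum_SigmaI[OF row Ps sm] by simp
  then have hs2: "((\<lambda>(y,x). P x * W x y) has_sum 1) (UNIV \<times> UNIV)"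
    using has_sum_swap[where f="\<lambda>(x,y). P x * W x y" and S=1 and A=UNIV and B=UNIV] by simp
  show ?thesis
    apply (rule has_sum_SigmaD[where A=UNIV and B="\<lambda>_. UNIV"])
    using hs2 push_inner[OF assms] by auto
qed


lemma push_pos:
  assumes "is_pmf P" "is_channel W" "\<forall>x. P x > 0" "\<exists>x. W x y > 0"
  shows "push P W y > 0"
proof -
  obtain x where x: "W x y > 0" using assms(4) by blast
  have "P x * W x y \<le> push P W y"
    apply (rule has_sum_le_single[OF push_inner[OF assms(1,2)]])
    using assms(1,2) channel_nonneg[OF assms(2)] unfolding is_pmf_def by auto
  moreover have "P x * W x y > 0" using x assms(3) by simp
  ultimately show ?thesis by simp
qed

lemma push_nonneg:
  assumes "is_pmf P" "is_channel W"
  shows "push P W y \<ge> 0"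
  unfolding push_def
  by (rule infsum_nonneg) (use assms channel_nonneg[OF assms(2)] in \<open>auto simp: is_pmf_def\<close>)

lemma push_lower:
  assumes "is_pmf P" "is_pmf Q" "is_channel W" "\<And>x. a * Q x \<le> P x"
  shows "a * push Q W y \<le> push P W y"
proof (rule has_sum_mono[OF has_sum_cmult_right[OF push_inner[OF assms(2,3)]] push_inner[OF assms(1,3)]])
  fix x
  have "a * Q x * W x y \<le> P x * W x y"
    using mult_right_mono[OF assms(4)[of x] channel_nonneg[OF assms(3)]] .
  then show "a * (Q x * W x y) \<le> P x * W x y" by (simp add: mult.assoc)
qed

lemma push_upper:
  assumes "is_pmf P" "is_pmf Q" "is_channel W" "\<And>x. P x \<le> a * Q x"
  shows "push P W y \<le> a * push Q W y"
proof (rule has_sum_mono[OF push_inner[OF assms(1,3)] has_sum_cmult_right[OF push_inner[OF assms(2,3)]]])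
  fix x
  have "P x * W x y \<le> a * Q x * W x y"
    using mult_right_mono[OF assms(4)[of x] channel_nonneg[OF assms(3)]] .
  then show "P x * W x y \<le> a * (Q x * W x y)" by (simp add: mult.assoc)
qed

lemma exists_lt_gt:
  fixes P Q :: "'a \<Rightarrow> real"
  assumes "is_pmf P" "is_pmf Q" "P \<noteq> Q"
  shows "\<exists>x. P x < Q x" "\<exists>x. Q x < P x"
proof -
  have P1: "(P has_sum 1) UNIV" and Q1: "(Q has_sum 1) UNIV" using assms unfolding is_pmf_def by auto
  have d1: "((\<lambda>x. P x - Q x) has_sum 0) UNIV" using has_sum_diff'[OF P1 Q1] by simp
  have d2: "((\<lambda>x. Q x - P x) has_sum 0) UNIV" using has_sum_diff'[OF Q1 P1] by simp
  show "\<exists>x. P x < Q x"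
  proof (rule ccontr)
    assume "\<not> (\<exists>x. P x < Q x)"
    then have nn: "\<And>x. 0 \<le> P x - Q x" by (simp add: not_less)
    have "infsum (\<lambda>x. P x - Q x) UNIV \<le> 0" using d1 infsumI by fastforce
    moreover have "(\<lambda>x. P x - Q x) summable_on UNIV" using d1 unfolding summable_on_def by blast
    ultimately have "P x - Q x = 0" for x
      using nonneg_infsum_le_0D[where f="\<lambda>x. P x - Q x" and A=UNIV, OF _ _ nn] by blast
    then show False using assms(3) by auto
  qed
  show "\<exists>x. Q x < P x"
  proof (rule ccontr)
    assume "\<not> (\<exists>x. Q x < P x)"
    then have nn: "\<And>x. 0 \<le> Q x - P x" by (simp add: not_less)
    have "infsum (\<lambda>x. Q x - P x) UNIV \<le> 0" using d2 infsumI by fastforce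
    moreover have "(\<lambda>x. Q x - P x) summable_on UNIV" using d2 unfolding summable_on_def by blast
    ultimately have "Q x - P x = 0" for x
      using nonneg_infsum_le_0D[where f="\<lambda>x. Q x - P x" and A=UNIV, OF _ _ nn] by blast
    then show False using assms(3) by auto
  qed
qed


lemma phi_ge_c:
  fixes f :: "real \<Rightarrow> real"
  assumes f_deriv: "(f has_real_derivative f1) (at 1)"
    and f_one: "f 1 = 0"
    and g_convex: "convex_on {0<..} (\<lambda>t. (f t - f0) / t)"
    and s: "s > 0" "s \<noteq> 1"
  shows "f0 + f1 \<le> (f s + f1 * (1 - s)) / (s - 1)^2"
proof -
  have "(f0+f1)*(s-1)^2 \<le> f s + f1*(1-s)" by (rule lower_f[OF f_deriv f_one g_convex s(1)])
  moreover have "(s-1)^2 > 0" using s by simp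
  ultimately show ?thesis by (simp add: le_divide_eq)
qed

lemma part1:
  fixes f :: "real \<Rightarrow> real" and f0 f1 :: real
    and Q :: "'x \<Rightarrow> real" and W :: "'x \<Rightarrow> 'y \<Rightarrow> real"
  assumes f_convex: "convex_on {0<..} f"
    and f_deriv: "(f has_real_derivative f1) (at 1)"
    and f_one: "f 1 = 0"
    and g_convex: "convex_on {0<..} (\<lambda>t. (f t - f0) / t)"
    and pos: "f0 + f1 > 0"
    and Q_pmf: "is_pmf Q" and Q_full: "\<forall>x. Q x > 0"
    and W_ch: "is_channel W"
    and W_cover: "\<forall>y. \<exists>x. W x y > 0"
    and P_pmf: "is_pmf P" and P_full: "\<forall>x. P x > 0" and PQ: "P \<noteq> Q"
    and DfX: "Df_finite f P Q" and chiX: "chi2_finite P Q"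
  shows "ereal (Df f (push P W) (push Q W) / Df f P Q)
          \<le> ereal (1 / (f0 + f1))
             * kappa f f1 (INF x. P x / Q x) (SUP x. ereal (P x / Q x))
             * ereal (chi2 (push P W) (push Q W) / chi2 P Q)"
proof -
  define xi1 where "xi1 = (INF x. P x / Q x)"
  define xi2 where "xi2 = (SUP x. ereal (P x / Q x))"
  have rpos: "P x / Q x > 0" for x using P_full Q_full by simp
  have bdd: "bdd_below (range (\<lambda>x. P x / Q x))"
    by (rule bdd_belowI[of _ 0]) (use rpos in \<open>auto simp: less_imp_le\<close>)
  have xi1le: "xi1 \<le> P x / Q x" for x unfolding xi1_def by (rule cINF_lower[OF bdd]) simp
  have xi1nn: "0 \<le> xi1" unfolding xi1_def by (rule cINF_greatest) (use rpos in \<open>auto simp: less_imp_le\<close>)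
  have le2: "ereal (P x / Q x) \<le> xi2" for x unfolding xi2_def by (rule SUP_upper) simp
  obtain x1 where x1: "P x1 < Q x1" using exists_lt_gt(1)[OF P_pmf Q_pmf PQ] by blast
  obtain x2 where x2: "Q x2 < P x2" using exists_lt_gt(2)[OF P_pmf Q_pmf PQ] by blast
  have "P x1 / Q x1 < 1" using x1 Q_full by simp
  then have xi1_lt: "xi1 < 1" using xi1le[of x1] by linarith
  have "1 < P x2 / Q x2" using x2 Q_full by simp
  then have "ereal 1 < ereal (P x2 / Q x2)" by simp
  then have xi2_gt: "ereal 1 < xi2" using le2[of x2] by (rule order_less_le_trans)
  define PY where "PY = push P W"
  define QY where "QY = push Q W"
  have QYpos: "QY y > 0" for y unfolding QY_def by (rule push_pos[OF Q_pmf W_ch Q_full W_cover[rule_format]])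
  have PYpos: "PY y > 0" for y unfolding PY_def by (rule push_pos[OF P_pmf W_ch P_full W_cover[rule_format]])
  have lowx: "xi1 * Q x \<le> P x" for x using xi1le[of x] Q_full by (simp add: le_divide_eq)
  have ry1: "xi1 \<le> PY y / QY y" for y
    using push_lower[OF P_pmf Q_pmf W_ch lowx, of y] QYpos[of y] unfolding PY_def QY_def
    by (simp add: le_divide_eq)
  have ry2: "ereal (PY y / QY y) \<le> xi2" for y
  proof (cases xi2)
    case (real s)
    have "P x \<le> s * Q x" for x using le2[of x] real Q_full by (simp add: divide_le_eq)
    then have "PY y \<le> s * QY y" unfolding PY_def QY_def using push_upper[OF P_pmf Q_pmf W_ch] by blast
    then show ?thesis using real QYpos[of y] by (simp add: divide_le_eq)
  next
    case PInf then show ?thesis by simp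
  next
    case MInf then show ?thesis using xi2_gt by simp
  qed
  have rypos: "PY y / QY y > 0" for y using PYpos QYpos by simp
  define K where "K = kappa f f1 xi1 xi2"
  have Kpos: "0 < K"
  proof -
    define s where "s = (xi1 + 1) / 2"
    have s: "xi1 < s" "s < 1" "s > 0" using xi1_lt xi1nn unfolding s_def by auto
    have "ereal ((f s + f1 * (1 - s)) / (s - 1)^2) \<le> K" unfolding K_def by (rule kappa_ge) (use s in auto)
    moreover have "f0 + f1 \<le> (f s + f1 * (1 - s)) / (s - 1)^2"
      by (rule phi_ge_c[OF f_deriv f_one g_convex]) (use s in auto)
    ultimately show ?thesis using pos
      by (metis ereal_less(2) ereal_less_eq(3) order_less_le_trans)
  qed
  have P1: "(P has_sum 1) UNIV" and Q1: "(Q has_sum 1) UNIV" using P_pmf Q_pmf unfolding is_pmf_def by auto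
  have PY1: "(PY has_sum 1) UNIV" unfolding PY_def by (rule push_pmf[OF P_pmf W_ch])
  have QY1: "(QY has_sum 1) UNIV" unfolding QY_def by (rule push_pmf[OF Q_pmf W_ch])
  have main: "ereal (Df f PY QY / Df f P Q) \<le> ereal (1/(f0+f1)) * K * ereal (chi2 PY QY / chi2 P Q)"
  proof (rule core(3)[OF P1 Q1 _ PY1 QY1 QYpos PQ pos f_one DfX chiX])
    show "\<And>x. 0 < Q x" using Q_full by blast
    show "\<And>x. (f0 + f1) * (P x / Q x - 1)\<^sup>2 \<le> f (P x / Q x) + f1 * (1 - P x / Q x)"
      by (rule lower_f[OF f_deriv f_one g_convex rpos])
    show "\<And>y. (f0 + f1) * (PY y / QY y - 1)\<^sup>2 \<le> f (PY y / QY y) + f1 * (1 - PY y / QY y)"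
      by (rule lower_f[OF f_deriv f_one g_convex rypos])
    show "0 < K" by (rule Kpos)
    fix y assume ne: "PY y / QY y \<noteq> 1"
    show "ereal ((f (PY y / QY y) + f1 * (1 - PY y / QY y)) / (PY y / QY y - 1)\<^sup>2) \<le> K"
    proof (rule kappa_upper[where \<phi>="\<lambda>s. (f s + f1 * (1 - s)) / (s - 1)^2" and a=xi1 and b=xi2])
      show "\<And>s. xi1 < s \<and> s < 1 \<or> 1 < s \<and> ereal s < xi2 \<Longrightarrow> ereal ((f s + f1 * (1 - s)) / (s - 1)\<^sup>2) \<le> K"
        unfolding K_def by (rule kappa_ge)
      show "PY y / QY y \<noteq> 1" by (rule ne)
      show "xi1 \<le> PY y / QY y" by (rule ry1)
      show "ereal (PY y / QY y) \<le> xi2" by (rule ry2)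
      show "isCont (\<lambda>s. (f s + f1 * (1 - s)) / (s - 1)\<^sup>2) (PY y / QY y)"
        by (rule phi_cont[OF f_convex rypos ne])
    qed
  qed
  then show ?thesis unfolding PY_def QY_def K_def xi1_def xi2_def .
qed


lemma Df_chi2:
  assumes "\<And>x. Q x > 0"
  shows "Df (\<lambda>t. (t - 1)^2) P Q = chi2 P Q"
    and "Df_finite (\<lambda>t. (t - 1)^2) P Q \<longleftrightarrow> chi2_finite P Q"
proof -
  have e: "(\<lambda>x. Q x * (P x / Q x - 1)^2) = (\<lambda>x. (P x - Q x)^2 / Q x)"
  proof
    fix x show "Q x * (P x / Q x - 1)^2 = (P x - Q x)^2 / Q x"
      using assms[of x] by (simp add: field_simps power2_eq_square)
  qed
  show "Df (\<lambda>t. (t - 1)^2) P Q = chi2 P Q" unfolding Df_def chi2_def e ..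
  show "Df_finite (\<lambda>t. (t - 1)^2) P Q \<longleftrightarrow> chi2_finite P Q" unfolding Df_finite_def chi2_finite_def e ..
qed

lemma part2:
  fixes f :: "real \<Rightarrow> real" and f0 f1 :: real
    and Q :: "'x \<Rightarrow> real" and W :: "'x \<Rightarrow> 'y \<Rightarrow> real"
  assumes f_convex: "convex_on {0<..} f"
    and f_deriv: "(f has_real_derivative f1) (at 1)"
    and f_one: "f 1 = 0"
    and f_zero: "(f \<longlongrightarrow> f0) (at_right 0)"
    and g_convex: "convex_on {0<..} (\<lambda>t. (f t - f0) / t)"
    and pos: "f0 + f1 > 0"
    and Q_pmf: "is_pmf Q" and Q_full: "\<forall>x. Q x > 0"
    and W_ch: "is_channel W"
    and W_cover: "\<forall>y. \<exists>x. W x y > 0"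
    and fin: "finite (UNIV :: 'x set)" and card: "2 \<le> CARD('x)"
  shows "mu (fext f f0) Q W
          \<le> ereal (1 / (f0 + f1)) * kappa f f1 0 (ereal (1 / Min (range Q)))
             * mu (\<lambda>t. (t - 1)^2) Q W"
proof -
  define m where "m = Min (range Q)"
  have finr: "finite (range Q)" using fin by simp
  have mQ: "m \<le> Q x" for x unfolding m_def using finr by simp
  have mpos: "m > 0" unfolding m_def using finr Q_full by (subst Min_gr_iff) auto
  have Q1: "(Q has_sum 1) UNIV" using Q_pmf unfolding is_pmf_def by auto
  have sQ: "sum Q UNIV = 1" using Q1 has_sum_finite_iff[OF fin, of Q 1] by simp
  have "of_nat (card (UNIV :: 'x set)) * m \<le> sum Q UNIV" by (rule sum_bounded_below) (use mQ in auto)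
  then have "real CARD('x) * m \<le> 1" using sQ by simp
  moreover have "real CARD('x) \<ge> 2" using card by simp
  then have "2 * m \<le> real CARD('x) * m" using mpos by (intro mult_right_mono) auto
  ultimately have m2: "2 * m \<le> 1" by linarith
  have b1: "ereal 1 < ereal (1/m)" using m2 mpos by (simp add: field_simps)
  define K where "K = kappa f f1 0 (ereal (1/m))"
  have Kge: "ereal (f0 + f1) \<le> K" unfolding K_def by (rule kappa_at0[OF f_zero b1])
  then have Kpos: "0 < K" using pos by (metis ereal_less(2) order_less_le_trans)
  define c where "c = f0 + f1"
  have lowgen: "c * (t - 1)^2 \<le> fext f f0 t + f1 * (1 - t)" if "t \<ge> 0" for t
  proof (cases "t = 0")
    case True then show ?thesis by (simp add: fext_def c_def)
  next
    case False
    then have "t > 0" using that by simp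
    then show ?thesis using lower_f[OF f_deriv f_one g_convex] by (simp add: fext_def c_def)
  qed
  have upgen: "ereal ((fext f f0 t + f1 * (1 - t)) / (t - 1)^2) \<le> K"
    if t: "0 \<le> t" "ereal t \<le> ereal (1/m)" "t \<noteq> 1" for t
  proof (cases "t = 0")
    case True then show ?thesis using Kge by (simp add: fext_def)
  next
    case False
    then have tp: "t > 0" using t by simp
    have "ereal ((f t + f1 * (1 - t)) / (t - 1)^2) \<le> K"
    proof (rule kappa_upper[where \<phi>="\<lambda>s. (f s + f1 * (1 - s)) / (s - 1)^2" and a=0 and b="ereal (1/m)"])
      show "\<And>s. 0 < s \<and> s < 1 \<or> 1 < s \<and> ereal s < ereal (1/m) \<Longrightarrow> ereal ((f s + f1 * (1 - s)) / (s - 1)\<^sup>2) \<le> K"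
        unfolding K_def by (rule kappa_ge)
      show "isCont (\<lambda>s. (f s + f1 * (1 - s)) / (s - 1)\<^sup>2) t"
        by (rule phi_cont[OF f_convex tp t(3)])
    qed (use t in auto)
    then show ?thesis using tp by (simp add: fext_def)
  qed
  have fext1: "fext f f0 1 = 0" using f_one by (simp add: fext_def)
  define QY where "QY = push Q W"
  have QYpos: "QY y > 0" for y unfolding QY_def by (rule push_pos[OF Q_pmf W_ch Q_full W_cover[rule_format]])
  have QY1: "(QY has_sum 1) UNIV" unfolding QY_def by (rule push_pmf[OF Q_pmf W_ch])
  show ?thesis
    unfolding mu_def[of "fext f f0"]
  proof (rule SUP_least)
    fix P assume "P \<in> {P. is_pmf P \<and> Df_finite (fext f f0) P Q \<and> 0 < Df (fext f f0) P Q}"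
    then have P_pmf: "is_pmf P" and DfX: "Df_finite (fext f f0) P Q" and Dfp: "0 < Df (fext f f0) P Q" by auto
    have PQ: "P \<noteq> Q"
    proof
      assume "P = Q"
      moreover have "(\<lambda>x. Q x * fext f f0 (Q x / Q x)) = (\<lambda>_. 0)" using Q_full fext1 by auto
      ultimately have "Df (fext f f0) P Q = 0" unfolding Df_def by simp
      then show False using Dfp by simp
    qed
    have P1: "(P has_sum 1) UNIV" and Pn: "\<And>x. 0 \<le> P x" using P_pmf unfolding is_pmf_def by auto
    have Ple1: "P x \<le> 1" for x by (rule has_sum_le_single[OF P1 Pn])
    have Pup: "P x \<le> (1/m) * Q x" for x
    proof -
      have "1 \<le> Q x / m" using mQ[of x] mpos by simp
      then show ?thesis using Ple1[of x] by simp
    qed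
    define PY where "PY = push P W"
    have PY1: "(PY has_sum 1) UNIV" unfolding PY_def by (rule push_pmf[OF P_pmf W_ch])
    have PYn: "0 \<le> PY y" for y unfolding PY_def by (rule push_nonneg[OF P_pmf W_ch])
    have PYup: "PY y \<le> (1/m) * QY y" for y unfolding PY_def QY_def by (rule push_upper[OF P_pmf Q_pmf W_ch Pup])
    have ry: "0 \<le> PY y / QY y" "PY y / QY y \<le> 1/m" for y
      using PYn[of y] PYup[of y] QYpos[of y] by (auto simp: divide_le_eq)
    have rx: "0 \<le> P x / Q x" for x using Pn[of x] Q_full[rule_format, of x] by simp
    have chiX: "chi2_finite P Q" unfolding chi2_finite_def using fin by simp
    have cpos: "c > 0" using pos c_def by simp
    note cr = core[where F="fext f f0" and c=c and K=K, OF P1 Q1 _ PY1 QY1 QYpos PQ cpos fext1 DfX chiX]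
    have ok: "\<And>x. 0 < Q x" using Q_full by blast
    have lx: "\<And>x. c * (P x / Q x - 1)\<^sup>2 \<le> fext f f0 (P x / Q x) + f1 * (1 - P x / Q x)"
      using lowgen rx by blast
    have ly: "\<And>y. c * (PY y / QY y - 1)\<^sup>2 \<le> fext f f0 (PY y / QY y) + f1 * (1 - PY y / QY y)"
      using lowgen ry by blast
    have uy: "\<And>y. PY y / QY y \<noteq> 1 \<Longrightarrow> ereal ((fext f f0 (PY y / QY y) + f1 * (1 - PY y / QY y)) / (PY y / QY y - 1)\<^sup>2) \<le> K"
      using upgen ry by simp
    note cr2 = cr[OF ok lx ly uy Kpos]
    have chipos: "0 < chi2 P Q" by (rule cr2(2))
    have bound: "ereal (Df (fext f f0) PY QY / Df (fext f f0) P Q) \<le> ereal (1/c) * K * ereal (chi2 PY QY / chi2 P Q)"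
      by (rule cr2(3))
    have inS: "P \<in> {P. is_pmf P \<and> Df_finite (\<lambda>t. (t - 1)^2) P Q \<and> 0 < Df (\<lambda>t. (t - 1)^2) P Q}"
      using P_pmf chiX chipos Df_chi2[OF ok, of P] by simp
    have "ereal (chi2 PY QY / chi2 P Q) = ereal (Df (\<lambda>t. (t - 1)^2) (push P W) (push Q W) / Df (\<lambda>t. (t - 1)^2) P Q)"
      using Df_chi2[OF ok, of P] Df_chi2[OF QYpos, of PY] unfolding PY_def QY_def by simp
    also have "\<dots> \<le> mu (\<lambda>t. (t - 1)^2) Q W"
      unfolding mu_def by (rule SUP_upper[OF inS])
    finally have chile: "ereal (chi2 PY QY / chi2 P Q) \<le> mu (\<lambda>t. (t - 1)^2) Q W" .
    have nn: "0 \<le> ereal (1/c) * K" using cpos Kpos by simp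
    show "ereal (Df (fext f f0) (push P W) (push Q W) / Df (fext f f0) P Q)
          \<le> ereal (1 / (f0 + f1)) * kappa f f1 0 (ereal (1 / Min (range Q))) * mu (\<lambda>t. (t - 1)^2) Q W"
      using order_trans[OF bound ereal_mult_left_mono[OF chile nn]]
      unfolding PY_def QY_def K_def c_def m_def by simp
  qed
qed

theorem theorem3:
  fixes f :: "real \<Rightarrow> real" and f0 f1 :: real
    and Q :: "'x::countable \<Rightarrow> real" and W :: "'x \<Rightarrow> 'y::countable \<Rightarrow> real"
  assumes f_convex: "convex_on {0<..} f"
    and f_deriv: "(f has_real_derivative f1) (at 1)"
    and f_one: "f 1 = 0"
    and f_zero: "(f \<longlongrightarrow> f0) (at_right 0)"
    and g_convex: "convex_on {0<..} (\<lambda>t. (f t - f0) / t)"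
    and pos: "f0 + f1 > 0"
    and Q_pmf: "is_pmf Q" and Q_full: "\<forall>x. Q x > 0"
    and W_ch: "is_channel W"
    and W_cover: "\<forall>y. \<exists>x. W x y > 0"
  shows
    "(\<forall>P :: 'x \<Rightarrow> real. is_pmf P \<and> (\<forall>x. P x > 0) \<and> P \<noteq> Q
        \<and> Df_finite f P Q \<and> chi2_finite P Q \<longrightarrow>
        ereal (Df f (push P W) (push Q W) / Df f P Q)
          \<le> ereal (1 / (f0 + f1))
             * kappa f f1 (INF x. P x / Q x) (SUP x. ereal (P x / Q x))
             * ereal (chi2 (push P W) (push Q W) / chi2 P Q))
     \<and> (finite (UNIV :: 'x set) \<and> 2 \<le> CARD('x) \<longrightarrow>
        mu (fext f f0) Q W
          \<le> ereal (1 / (f0 + f1)) * kappa f f1 0 (ereal (1 / Min (range Q)))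
             * mu (\<lambda>t. (t - 1)^2) Q W)"
proof (intro conjI allI impI)
  fix P :: "'x \<Rightarrow> real"
  assume "is_pmf P \<and> (\<forall>x. P x > 0) \<and> P \<noteq> Q \<and> Df_finite f P Q \<and> chi2_finite P Q"
  then show "ereal (Df f (push P W) (push Q W) / Df f P Q)
          \<le> ereal (1 / (f0 + f1))
             * kappa f f1 (INF x. P x / Q x) (SUP x. ereal (P x / Q x))
             * ereal (chi2 (push P W) (push Q W) / chi2 P Q)"
    using part1[OF f_convex f_deriv f_one g_convex pos Q_pmf Q_full W_ch W_cover] by blast
next
  assume "finite (UNIV :: 'x set) \<and> 2 \<le> CARD('x)"
  then show "mu (fext f f0) Q W
          \<le> ereal (1 / (f0 + f1)) * kappa f f1 0 (ereal (1 / Min (range Q)))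
             * mu (\<lambda>t. (t - 1)^2) Q W"
    using part2[OF f_convex f_deriv f_one f_zero g_convex pos Q_pmf Q_full W_ch W_cover] by blast
qed

end
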